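(* Let $h,k,m$ be integers with $h\ge1$, $k\ge1$, $\gcd(h,k)=1$, $1\le m\le d=h+k$. Then $\det A_m(h,k)=(-1)^{(d-1)(m-1)}\left[\frac{k}{d}\right]$. In particular $\det K(h,k)=\left[\frac{k}{d}\right]$.
   Context: For $h,k\ge1$ coprime and $d=h+k$, $A_m(h,k)$ ($1\le m\le d$) is the $d\times d$ permutation matrix with $(i,j)$ entry $1$ if $j=\sigma(i)$ and $0$ otherwise, where $\sigma(i)\in\{1,\dots,d\}$ is determined by $\sigma(i)\equiv ki+m-k\pmod d$. The $(d,d)$ entry of $A_k(h,k)$ is $1$, and $K(h,k)$ is the $(d-1)\times(d-1)$ upper-left block of $A_k(h,k)$ (so $A_k(h,k)=\begin{pmatrix}K(h,k)&0\\0&1\end{pmatrix}$). For integers $d\ge1$, $k$ with $\gcd(d,k)=1$, $\left[\frac{k}{d}\right]$ denotes the signature of the permutation $x\mapsto kx$ of $\mathbb{Z}/d\mathbb{Z}$. *)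

theory Defs
  imports "Jordan_Normal_Form.Determinant" "HOL-Combinatorics.Permutations"
begin

text \<open>sigma for A_m(h,k), with 1-based indices i in {1..d}, d = h+k:
  sigma(i) is the unique element of {1..d} congruent to k*i + m - k mod d.\<close>
definition sigma_hk :: "nat \<Rightarrow> nat \<Rightarrow> nat \<Rightarrow> int \<Rightarrow> int" where
  "sigma_hk h k m i = ((int k * i + int m - int k - 1) mod int (h + k)) + 1"

text \<open>A_m(h,k) as a d x d integer matrix; Isabelle's matrices are 0-indexed,
  so entry (i,j) here corresponds to the paper's entry (i+1,j+1).\<close>
definition A_mat :: "nat \<Rightarrow> nat \<Rightarrow> nat \<Rightarrow> int mat" where
  "A_mat m h k = mat (h + k) (h + k)
     (\<lambda>(i, j). if int j + 1 = sigma_hk h k m (int i + 1) then 1 else 0)"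

definition K_mat :: "nat \<Rightarrow> nat \<Rightarrow> int mat" where
  "K_mat h k = mat (h + k - 1) (h + k - 1) (\<lambda>(i, j). A_mat k h k $$ (i, j))"

text \<open>[k/d]: signature of the permutation x \<mapsto> k x of Z/dZ, realised on the
  representatives {0..<d} (extended by the identity outside).\<close>
definition jac_sym :: "nat \<Rightarrow> nat \<Rightarrow> int" where
  "jac_sym k d = sign (\<lambda>x::nat. if x < d then (k * x) mod d else x)"

end

theory Submission imports Defs begin

lemma det_perm:
  assumes f: "f permutes {0..<n}"
  shows "det (mat n n (\<lambda>(i,j). if j = f i then 1 else 0) :: int mat) = sign f"
proof -
  have "det (mat n n (\<lambda>(i,j). if j = f i then 1 else 0) :: int mat)
     = (\<Sum>p\<in>{p. p permutes {0..<n}}. of_int (sign p) * (\<Prod>i = 0..<n. (if p i = f i then 1 else 0)))"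
    by (subst det_def'[of _ n]) auto
  also have "\<dots> = (\<Sum>p\<in>{p. p permutes {0..<n}}. if p = f then of_int (sign p) else 0)"
  proof (rule sum.cong[OF refl])
    fix p assume "p \<in> {p. p permutes {0..<n}}"
    hence p: "p permutes {0..<n}" by simp
    show "of_int (sign p) * (\<Prod>i = 0..<n. (if p i = f i then 1 else 0)) = (if p = f then of_int (sign p) else (0::int))"
    proof (cases "p = f")
      case True thus ?thesis by simp
    next
      case False
      then obtain x where "p x \<noteq> f x" by auto
      moreover have "x \<in> {0..<n}" using p f calculation unfolding permutes_def by metis
      ultimately have "(\<Prod>i = 0..<n. (if p i = f i then 1 else 0::int)) = 0"
        by (intro prod_zero) auto
      thus ?thesis using False by simp
    qed
  qed
  also have "\<dots> = sign f" using f by (subst sum.delta) (auto simp: finite_permutations)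
  finally show ?thesis .
qed

definition rot :: "nat \<Rightarrow> nat \<Rightarrow> nat" where
  "rot d = (\<lambda>x. if x < d then (x + 1) mod d else x)"

lemma rot_Suc: "1 \<le> d \<Longrightarrow> rot (Suc d) = transpose 0 d \<circ> rot d"
proof
  fix x assume d: "1 \<le> d"
  consider "x < d - 1" | "x = d - 1" | "x = d" | "x > d" by linarith
  thus "rot (Suc d) x = (transpose 0 d \<circ> rot d) x"
  proof cases
    case 1
    hence "(x + 1) mod Suc d = x + 1" "(x + 1) mod d = x + 1" "x < d" "x < Suc d" by simp_all
    thus ?thesis using 1 by (simp add: rot_def transpose_def)
  next
    case 2
    hence "(x + 1) mod Suc d = d" "(x + 1) mod d = 0" "x < d" "x < Suc d" using d by simp_all
    thus ?thesis by (simp add: rot_def transpose_def)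
  next
    case 3
    hence "(x + 1) mod Suc d = 0" "\<not> x < d" "x < Suc d" by simp_all
    thus ?thesis using 3 by (simp add: rot_def transpose_def)
  next
    case 4
    hence "\<not> x < d" "\<not> x < Suc d" "x \<noteq> 0" by simp_all
    thus ?thesis using 4 by (simp add: rot_def transpose_def)
  qed
qed

lemma rot_sign: "1 \<le> d \<Longrightarrow> rot d permutes {0..<d} \<and> sign (rot d) = (-1) ^ (d - 1)"
proof (induction d)
  case 0 thus ?case by simp
next
  case (Suc d)
  show ?case
  proof (cases "d = 0")
    case True
    have "rot 1 = id" unfolding rot_def by (auto simp: fun_eq_iff)
    thus ?thesis using True by (simp add: id_def)
  next
    case False
    hence d: "1 \<le> d" by simp
    have t: "transpose 0 d permutes {0..<Suc d}" by (simp add: permutes_swap_id)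
    have s1: "sign (transpose 0 d) = -1" using d by (simp add: sign_swap_id)
    have r: "rot d permutes {0..<d} \<and> sign (rot d) = (-1) ^ (d - 1)" using Suc d by simp
    have r2: "rot d permutes {0..<Suc d}" using r permutes_subset by fastforce
    have c: "transpose 0 d \<circ> rot d permutes {0..<Suc d}" using t r2 by (rule permutes_compose[rotated])
    have p1: "permutation (transpose 0 d)" using t by (rule permutes_imp_permutation[rotated]) simp
    have p2: "permutation (rot d)" using r2 by (rule permutes_imp_permutation[rotated]) simp
    have sc: "sign (transpose 0 d \<circ> rot d) = sign (transpose 0 d) * sign (rot d)"
      using p1 p2 by (rule sign_compose)
    obtain e where e: "d = Suc e" using d by (cases d) auto
    have "sign (rot (Suc d)) = (-1) ^ (Suc d - 1)"
      unfolding rot_Suc[OF d] sc s1 using r unfolding e by simp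
    moreover have "rot (Suc d) permutes {0..<Suc d}" unfolding rot_Suc[OF d] by (rule c)
    ultimately show ?thesis by blast
  qed
qed

definition Pc :: "nat \<Rightarrow> nat \<Rightarrow> nat \<Rightarrow> nat \<Rightarrow> nat" where
  "Pc d k c = (\<lambda>x. if x < d then (k * x + c) mod d else x)"

lemma Pc_Suc: "Pc d k (Suc c) = rot d \<circ> Pc d k c"
  unfolding Pc_def rot_def by (auto simp: fun_eq_iff mod_Suc_eq)

lemma mult_perm:
  assumes "coprime k d"
  shows "(\<lambda>x::nat. if x < d then (k * x) mod d else x) permutes {0..<d}"
proof (rule bij_imp_permutes)
  have "inj_on (\<lambda>x::nat. if x < d then (k * x) mod d else x) {0..<d}"
  proof (rule inj_onI)
    fix x y assume "x \<in> {0..<d}" "y \<in> {0..<d}" and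
      e: "(if x < d then (k * x) mod d else x) = (if y < d then (k * y) mod d else y)"
    hence "int (k * x mod d) = int (k * y mod d)" by simp
    hence "(int k * int x) mod int d = (int k * int y) mod int d" by (simp add: zmod_int)
    hence "int d dvd int k * (int x - int y)" by (simp add: mod_eq_dvd_iff right_diff_distrib)
    moreover have "coprime (int d) (int k)" using assms by (simp add: coprime_commute)
    ultimately have dv: "int d dvd (int x - int y)" using coprime_dvd_mult_right_iff by blast
    show "x = y"
    proof (rule ccontr)
      assume "x \<noteq> y"
      hence "int x - int y \<noteq> 0" by simp
      from dvd_imp_le_int[OF this dv] \<open>x \<in> _\<close> \<open>y \<in> _\<close> show False by auto
    qed
  qed
  moreover have "(\<lambda>x::nat. if x < d then (k * x) mod d else x) ` {0..<d} \<subseteq> {0..<d}"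
    by auto
  ultimately have "(\<lambda>x::nat. if x < d then (k * x) mod d else x) ` {0..<d} = {0..<d}"
    by (intro endo_inj_surj) auto
  with \<open>inj_on _ _\<close> show "bij_betw (\<lambda>x::nat. if x < d then (k * x) mod d else x) {0..<d} {0..<d}"
    by (simp add: bij_betw_def)
qed auto

lemma Pc_sign:
  assumes "coprime k d" "1 \<le> d"
  shows "Pc d k c permutes {0..<d} \<and> sign (Pc d k c) = (-1) ^ ((d - 1) * c) * jac_sym k d"
proof (induction c)
  case 0
  have "Pc d k 0 = (\<lambda>x::nat. if x < d then (k * x) mod d else x)"
    by (simp add: Pc_def fun_eq_iff)
  thus ?case using mult_perm[OF assms(1)] unfolding jac_sym_def
    by auto
next
  case (Suc c)
  have r: "rot d permutes {0..<d}" "sign (rot d) = (-1) ^ (d - 1)" using rot_sign[OF assms(2)] by auto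
  have p1: "permutation (rot d)" using r(1) by (rule permutes_imp_permutation[rotated]) simp
  have p2: "permutation (Pc d k c)" using conjunct1[OF Suc] by (rule permutes_imp_permutation[rotated]) simp
  have c: "rot d \<circ> Pc d k c permutes {0..<d}" using conjunct1[OF Suc] r(1) by (rule permutes_compose)
  have sc: "sign (rot d \<circ> Pc d k c) = sign (rot d) * sign (Pc d k c)" using p1 p2 by (rule sign_compose)
  have pw: "((-1)::int) ^ ((d - 1) * Suc c) = (-1) ^ (d - 1) * (-1) ^ ((d - 1) * c)"
    by (simp add: power_add)
  have "sign (Pc d k (Suc c)) = (-1) ^ ((d - 1) * Suc c) * jac_sym k d"
    unfolding Pc_Suc sc r(2) pw using conjunct2[OF Suc] by simp
  thus ?case using c unfolding Pc_Suc by blast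
qed

lemma A_mat_eq:
  assumes "1 \<le> m"
  shows "A_mat m h k = mat (h+k) (h+k) (\<lambda>(i,j). if j = Pc (h+k) k (m-1) i then 1 else 0)"
proof (rule eq_matI)
  fix i j assume i: "i < dim_row (mat (h+k) (h+k) (\<lambda>(i,j). if j = Pc (h+k) k (m-1) i then 1 else (0::int)))"
    and j: "j < dim_col (mat (h+k) (h+k) (\<lambda>(i,j). if j = Pc (h+k) k (m-1) i then 1 else (0::int)))"
  have e: "int k * (int i + 1) + int m - int k - 1 = int (k * i + (m - 1))" using assms by (simp add: algebra_simps)
  have "(int j + 1 = sigma_hk h k m (int i + 1)) = (j = (k * i + (m - 1)) mod (h+k))"
    unfolding sigma_hk_def e by (simp flip: of_nat_mod of_nat_add)
  thus "A_mat m h k $$ (i, j) = mat (h+k) (h+k) (\<lambda>(i,j). if j = Pc (h+k) k (m-1) i then 1 else 0) $$ (i, j)"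
    using i j by (simp add: A_mat_def Pc_def)
qed (auto simp: A_mat_def)

theorem proposition3:
  fixes h k m :: nat
  assumes "h \<ge> 1" and "k \<ge> 1" and "coprime h k"
    and "1 \<le> m" and "m \<le> h + k"
  shows "det (A_mat m h k) = (-1) ^ ((h + k - 1) * (m - 1)) * jac_sym k (h + k)
         \<and> det (K_mat h k) = jac_sym k (h + k)"
proof
  define d where "d = h + k"
  have cop: "coprime k d"
  proof (rule coprimeI)
    fix c assume c: "c dvd k" "c dvd d"
    hence "c dvd h" unfolding d_def by (simp add: dvd_add_left_iff)
    thus "is_unit c" using assms(3) c coprime_common_divisor by blast
  qed
  have d1: "1 \<le> d" using assms unfolding d_def by simp
  show "det (A_mat m h k) = (-1) ^ ((h + k - 1) * (m - 1)) * jac_sym k (h + k)"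
    using Pc_sign[OF cop d1, of "m-1"] A_mat_eq[OF assms(4)] det_perm[of "Pc d k (m-1)" d]
    unfolding d_def by simp
  have P: "Pc d k (k-1) permutes {0..<d} \<and> sign (Pc d k (k-1)) = (-1) ^ ((d - 1) * (k-1)) * jac_sym k d"
    using Pc_sign[OF cop d1] .
  have fix1: "Pc d k (k-1) (d-1) = d-1"
  proof -
    obtain e where e: "d = Suc e" using d1 by (cases d) auto
    obtain l where l: "k = Suc l" using assms(2) by (cases k) auto
    have "k * (d - 1) + (k - 1) = e + l * Suc e" unfolding e l by (simp add: algebra_simps)
    moreover have "(e + l * Suc e) mod Suc e = e" by (metis mod_mult_self1 mod_less lessI)
    ultimately have "(k * (d - 1) + (k - 1)) mod d = d - 1" using e by simp
    thus ?thesis using d1 unfolding Pc_def by simp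
  qed
  have P2: "Pc d k (k-1) permutes {0..<d-1}"
  proof (rule permutes_superset[OF conjunct1[OF P]])
    fix x assume "x \<in> {0..<d} - {0..<d-1}"
    hence "x = d - 1" by auto
    thus "Pc d k (k-1) x = x" using fix1 by simp
  qed
  have ev: "even ((d - 1) * (k - 1))"
  proof (cases "even k")
    case True
    have "odd h"
    proof
      assume "even h"
      hence "is_unit (2::nat)" using True assms(3) coprime_common_divisor by blast
      thus False by simp
    qed
    thus ?thesis using True assms(2) unfolding d_def by simp
  next
    case False thus ?thesis using assms(2) by simp
  qed
  have K: "K_mat h k = mat (d-1) (d-1) (\<lambda>(i,j). if j = Pc d k (k-1) i then 1 else 0)"
    unfolding K_mat_def A_mat_eq[OF assms(2)] d_def by (rule eq_matI) auto
  show "det (K_mat h k) = jac_sym k (h + k)"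
    unfolding K det_perm[OF P2] using P ev unfolding d_def by simp
qed

end
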